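(* Let $r(\cdot)\in\mathcal{P}^{\log}(\mathbb{R})$ with $r(x)=2$ for all $x\in[2,5]$ and $r^-_{[-7,14]}>1$. Then the kernel $\tilde K(x,y)=K_1(y)K_2(x-y-1)$ belongs to $H_{r(\cdot)}=H_{r(\cdot),1}\cap H_{r(\cdot),2}$.
   Context: Here $n=1$. Fix $\beta>0$; $K_1(t)=\chi_{[2,3]}(t)$ and $K_2(t)=t^{-1/2}\big[\log(e/t)\big]^{-\frac{1+\beta}{2}}\chi_{(0,1)}(t)$. Cubes are intervals $Q$; $mQ$ is the concentric interval of length $m\ell(Q)$. $\|f\|_{p(\cdot)}=\inf\{\lambda>0:\int_{\{p<\infty\}}|f/\lambda|^{p(x)}dx+\|(f/\lambda)\chi_{\{p=\infty\}}\|_\infty\le1\}$. $\mathcal{P}^{\log}(\mathbb{R})$: $1/p$ satisfies $|1/p(x)-1/p(y)|\le c_0/(-\log|x-y|)$ for $|x-y|<1/2$ and $|1/p(x)-1/p_\infty|\le c_\infty/\log(e+|x|)$. $r^-_E=\operatorname{ess\,inf}_Er$. $K\in H_{r(\cdot),1}$ means $\sup_Q\sup_{x,z\in\frac12Q}\sum_{m\ge1}2^m\ell(Q)\frac{\|[K(x,\cdot)-K(z,\cdot)]\chi_{2^mQ\setminus2^{m-1}Q}\|_{r(\cdot)}}{\|\chi_{2^mQ}\|_{r(\cdot)}}<\infty$; $K\in H_{r(\cdot),2}$ is the same with $K(\cdot,x)-K(\cdot,z)$. *)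

theory Defs
  imports "HOL-Analysis.Analysis"
begin

text \<open>Variable exponents are functions p :: real \<Rightarrow> ereal (values in [1,\<infinity>]).
  Reciprocal 1/p, with 1/\<infinity> = 0.\<close>
definition recip :: "ereal \<Rightarrow> real" where
  "recip q = (if q = \<infinity> then 0 else 1 / real_of_ereal q)"

definition ess_sup_enn :: "(real \<Rightarrow> ennreal) \<Rightarrow> ennreal" where
  "ess_sup_enn g = Inf {a. AE x in lborel. g x \<le> a}"

definition ess_inf_on :: "real set \<Rightarrow> (real \<Rightarrow> ereal) \<Rightarrow> ereal" where
  "ess_inf_on E r = Sup {a. AE x in lborel. x \<in> E \<longrightarrow> a \<le> r x}"

definition var_modular :: "(real \<Rightarrow> ereal) \<Rightarrow> (real \<Rightarrow> real) \<Rightarrow> ennreal" where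
  "var_modular p f =
     (\<integral>\<^sup>+ x. indicator {y. p y < \<infinity>} x * ennreal (\<bar>f x\<bar> powr real_of_ereal (p x)) \<partial>lborel)
     + ess_sup_enn (\<lambda>x. ennreal (\<bar>f x\<bar>) * indicator {y. p y = \<infinity>} x)"

text \<open>Luxemburg norm ||f||_{p(.)} (value \<top> if the defining set is empty).\<close>
definition var_norm :: "(real \<Rightarrow> ereal) \<Rightarrow> (real \<Rightarrow> real) \<Rightarrow> ennreal" where
  "var_norm p f = Inf {ennreal t | t. t > 0 \<and> var_modular p (\<lambda>x. f x / t) \<le> 1}"

definition P_log :: "(real \<Rightarrow> ereal) \<Rightarrow> bool" where
  "P_log p \<longleftrightarrow> p \<in> borel_measurable borel \<and> (\<forall>x. 1 \<le> p x) \<and>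
     (\<exists>c0. \<forall>x y. x \<noteq> y \<and> \<bar>x - y\<bar> < 1/2 \<longrightarrow>
            \<bar>recip (p x) - recip (p y)\<bar> \<le> c0 / (- ln \<bar>x - y\<bar>)) \<and>
     (\<exists>pinf cinf. 1 \<le> pinf \<and> (\<forall>x. \<bar>recip (p x) - recip pinf\<bar> \<le> cinf / ln (exp 1 + \<bar>x\<bar>)))"

definition cube :: "real \<Rightarrow> real \<Rightarrow> real set" where
  "cube c l = {c - l/2 .. c + l/2}"

definition annulus_term ::
  "(real \<Rightarrow> ereal) \<Rightarrow> (real \<Rightarrow> real) \<Rightarrow> real \<Rightarrow> real \<Rightarrow> nat \<Rightarrow> ennreal" where
  "annulus_term r g c l m =
     ennreal (2 ^ m * l) *
     var_norm r (\<lambda>y. g y * indicator (cube c (2 ^ m * l) - cube c (2 ^ (m - 1) * l)) y)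
     / var_norm r (indicator (cube c (2 ^ m * l)))"

definition H1 :: "(real \<Rightarrow> ereal) \<Rightarrow> (real \<Rightarrow> real \<Rightarrow> real) \<Rightarrow> bool" where
  "H1 r K \<longleftrightarrow>
     (SUP (c, l, x, z) \<in> {(c, l, x, z). l > 0 \<and> x \<in> cube c (l/2) \<and> z \<in> cube c (l/2)}.
        (\<Sum>m. annulus_term r (\<lambda>y. K x y - K z y) c l (Suc m))) < (\<infinity>::ennreal)"

definition H2 :: "(real \<Rightarrow> ereal) \<Rightarrow> (real \<Rightarrow> real \<Rightarrow> real) \<Rightarrow> bool" where
  "H2 r K \<longleftrightarrow>
     (SUP (c, l, x, z) \<in> {(c, l, x, z). l > 0 \<and> x \<in> cube c (l/2) \<and> z \<in> cube c (l/2)}.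
        (\<Sum>m. annulus_term r (\<lambda>y. K y x - K y z) c l (Suc m))) < (\<infinity>::ennreal)"

definition K1 :: "real \<Rightarrow> real" where
  "K1 t = indicator {2..3} t"

definition K2 :: "real \<Rightarrow> real \<Rightarrow> real" where
  "K2 \<beta> t = (if 0 < t \<and> t < 1
     then t powr (-1/2) * (ln (exp 1 / t)) powr (-(1 + \<beta>)/2) else 0)"

end

theory Submission imports Defs "HOL-Real_Asymp.Real_Asymp" begin

lemma K2_sq:
  assumes "0 < t" "t < 1"
  shows "(K2 b t)^2 = (1 - ln t) powr (-(1+b)) / t"
proof -
  have l: "ln (exp 1 / t) = 1 - ln t" using assms by (simp add: ln_div)
  have pos: "0 < 1 - ln t" using ln_less_zero[OF assms] by linarith
  have "(K2 b t)^2 = (t powr (-1/2))^2 * ((1 - ln t) powr (-(1+b)/2))^2"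
    using assms l by (simp add: K2_def power_mult_distrib)
  also have "(t powr (-1/2))^2 = t powr (-1)"
    using assms by (simp add: powr_powr[symmetric] power2_eq_square powr_add[symmetric])
  also have "((1 - ln t) powr (-(1+b)/2))^2 = (1 - ln t) powr (-(1+b))"
    using pos by (simp add: power2_eq_square powr_add[symmetric])
  finally show ?thesis using assms by (simp add: powr_minus divide_inverse)
qed

lemma K2_int:
  assumes b: "b > 0"
  shows "(\<integral>\<^sup>+t. ennreal ((K2 b t)^2) \<partial>lborel) = ennreal (1/b)"
proof -
  define f where "f t = (1 - ln t) powr (-(1+b)) / t" for t
  define F where "F t = (1 - ln t) powr (-b) / b" for t
  have D: "DERIV F x :> f x" if "0 < ereal x" "ereal x < 1" for x
  proof -
    have x: "0 < x" "x < 1" using that by auto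
    have pos: "0 < 1 - ln x" using ln_less_zero[OF x] by linarith
    have "((\<lambda>t. (1 - ln t) powr (-b) / b) has_real_derivative
       ((-b) * (1 - ln x) powr (-b - 1) * (- (1/x))) / b) (at x)"
      using x pos by (auto intro!: derivative_eq_intros)
    moreover have "((-b) * (1 - ln x) powr (-b - 1) * (- (1/x))) / b = f x"
      proof -
      have e: "-b - 1 = -1 - b" by simp
      show ?thesis using b by (simp add: f_def e)
    qed
    ultimately show ?thesis unfolding F_def by simp
  qed
  have C: "isCont f x" if "0 < ereal x" "ereal x < 1" for x
  proof -
    have x: "0 < x" "x < 1" using that by auto
    have pos: "0 < 1 - ln x" using ln_less_zero[OF x] by linarith
    show ?thesis unfolding f_def using x pos by (auto intro!: continuous_intros)
  qed
  have N: "AE x in lborel. 0 < ereal x \<longrightarrow> ereal x < 1 \<longrightarrow> 0 \<le> f x"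
    by (auto simp: f_def)
  have "filterlim (\<lambda>t::real. 1 - ln t) at_top (at_right 0)" by real_asymp
  then have "((\<lambda>t. (1 - ln t) powr (-b)) \<longlongrightarrow> 0) (at_right 0)"
    using b by (intro tendsto_neg_powr) auto
  then have "(F \<longlongrightarrow> 0) (at_right 0)" unfolding F_def
    using tendsto_divide_zero by blast
  then have A: "((F \<circ> real_of_ereal) \<longlongrightarrow> 0) (at_right (0::ereal))"
    by (simp add: zero_ereal_def ereal_tendsto_simps)
  have "(F \<longlongrightarrow> 1/b) (at_left 1)" unfolding F_def
    using b by (auto intro!: tendsto_eq_intros)
  then have B: "((F \<circ> real_of_ereal) \<longlongrightarrow> 1/b) (at_left (1::ereal))"
    by (simp add: one_ereal_def ereal_tendsto_simps)
  note R = interval_integral_FTC_nonneg[of 0 1 F f, OF _ D C N A B]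
  have E: "einterval 0 1 = {0<..<(1::real)}" by (auto simp: einterval_def)
  have I: "integrable lborel (\<lambda>x. indicator {0<..<(1::real)} x * f x)"
    using R(1) unfolding E set_integrable_def by simp
  have V: "(\<integral>x. indicator {0<..<(1::real)} x * f x \<partial>lborel) = 1/b"
    using R(2) unfolding interval_lebesgue_integral_def E set_lebesgue_integral_def by simp
  have "(\<integral>\<^sup>+t. ennreal ((K2 b t)^2) \<partial>lborel) = (\<integral>\<^sup>+t. ennreal (indicator {0<..<(1::real)} t * f t) \<partial>lborel)"
  proof (rule nn_integral_cong)
    fix t :: real
    show "ennreal ((K2 b t)\<^sup>2) = ennreal (indicator {0<..<1} t * f t)"
    proof (cases "0 < t \<and> t < 1")
      case True then show ?thesis by (simp add: K2_sq f_def)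
    next
      case False then show ?thesis by (auto simp: K2_def)
    qed
  qed
  also have "\<dots> = ennreal (1/b)"
    using nn_integral_eq_integral[OF I] V by (auto simp: f_def indicator_def)
  finally show ?thesis .
qed
lemma K2_meas: "K2 b \<in> borel_measurable borel"
  unfolding K2_def by measurable

lemma K2_meas_comp: "f \<in> borel_measurable M \<Longrightarrow> (\<lambda>x. K2 b (f x)) \<in> borel_measurable M"
  by (rule measurable_compose[OF _ K2_meas])

lemma K2_int_refl:
  assumes "b > 0"
  shows "(\<integral>\<^sup>+y. ennreal ((K2 b (a - y))^2) \<partial>lborel) = ennreal (1/b)"
  using nn_integral_real_affine[of "\<lambda>t. ennreal ((K2 b t)^2)" "-1" a] K2_int[OF assms] K2_meas[of b]
  by simp

lemma K2_int_shift:
  assumes "b > 0"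
  shows "(\<integral>\<^sup>+y. ennreal ((K2 b (y - a))^2) \<partial>lborel) = ennreal (1/b)"
  using nn_integral_real_affine[of "\<lambda>t. ennreal ((K2 b t)^2)" "1" "-a"] K2_int[OF assms] K2_meas[of b]
  by simp

lemma norm_upper:
  assumes supp: "\<And>y. g y \<noteq> 0 \<Longrightarrow> r y = 2" and M: "M > 0"
    and I: "(\<integral>\<^sup>+y. ennreal ((g y / M)^2) \<partial>lborel) \<le> 1"
  shows "var_norm r g \<le> ennreal M"
proof -
  have e1: "(\<integral>\<^sup>+x. indicator {y. r y < \<infinity>} x * ennreal (\<bar>g x / M\<bar> powr real_of_ereal (r x)) \<partial>lborel)
      = (\<integral>\<^sup>+y. ennreal ((g y / M)^2) \<partial>lborel)"
  proof (rule nn_integral_cong)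
    fix x
    show "indicator {y. r y < \<infinity>} x * ennreal (\<bar>g x / M\<bar> powr real_of_ereal (r x)) = ennreal ((g x / M)^2)"
    proof (cases "g x = 0")
      case True then show ?thesis by simp
    next
      case False
      then have "r x = 2" by (rule supp)
      moreover have "\<bar>g x / M\<bar> powr 2 = (g x / M)^2"
        using False M by (simp add: powr_numeral power_divide)
      ultimately show ?thesis by simp
    qed
  qed
  have e2: "ess_sup_enn (\<lambda>x. ennreal \<bar>g x / M\<bar> * indicator {y. r y = \<infinity>} x) = 0"
  proof -
    have Z: "(\<lambda>x. ennreal \<bar>g x / M\<bar> * indicator {y. r y = \<infinity>} x) = (\<lambda>x. 0)"
    proof
      fix x show "ennreal \<bar>g x / M\<bar> * indicator {y. r y = \<infinity>} x = 0"
        using supp[of x] by (cases "g x = 0") auto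
    qed
    show ?thesis unfolding ess_sup_enn_def Z by (simp add: bot_ennreal[symmetric])
  qed
  have "var_modular r (\<lambda>x. g x / M) \<le> 1"
    unfolding var_modular_def e1 e2 using I by simp
  then have "ennreal M \<in> {ennreal t | t. t > 0 \<and> var_modular r (\<lambda>x. g x / t) \<le> 1}"
    using M by blast
  then show ?thesis unfolding var_norm_def by (rule Inf_lower)
qed

lemma norm_lower:
  assumes meas: "r \<in> borel_measurable borel" and ge: "\<And>x. 1 \<le> r x" and L: "L > 0"
  shows "ennreal (min 1 L) \<le> var_norm r (indicator (cube c L))"
  unfolding var_norm_def
proof (rule Inf_greatest)
  fix u assume "u \<in> {ennreal t |t. 0 < t \<and> var_modular r (\<lambda>x. indicator (cube c L) x / t) \<le> 1}"
  then obtain t where u: "u = ennreal t" and t: "t > 0"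
    and mod: "var_modular r (\<lambda>x. indicator (cube c L) x / t) \<le> 1" by blast
  show "ennreal (min 1 L) \<le> u"
  proof (rule ccontr)
    assume "\<not> ennreal (min 1 L) \<le> u"
    then have "ennreal t < ennreal (min 1 L)" using u by simp
    then have tl: "t < min 1 L" using t by (simp add: ennreal_less_iff)
    have t1: "1 < 1/t" using tl t by simp
    define E where "E = cube c L"
    define A where "A = E \<inter> {x. r x < \<infinity>}"
    define B where "B = E \<inter> {x. r x = \<infinity>}"
    have mAB[measurable]: "A \<in> sets lborel" "B \<in> sets lborel" "E \<in> sets lborel"
      unfolding A_def B_def E_def cube_def using meas by auto
    have EAB: "E = A \<union> B" unfolding A_def B_def using less_top by auto
    have mE: "emeasure lborel E = ennreal L" unfolding E_def cube_def using L by simp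
    define I where "I = (\<integral>\<^sup>+x. indicator {y. r y < \<infinity>} x * ennreal (\<bar>indicator (cube c L) x / t\<bar> powr real_of_ereal (r x)) \<partial>lborel)"
    define S where "S = ess_sup_enn (\<lambda>x. ennreal \<bar>indicator (cube c L) x / t\<bar> * indicator {y. r y = \<infinity>} x)"
    have IS: "I + S \<le> 1" using mod unfolding var_modular_def I_def S_def .
    show False
    proof (cases "emeasure lborel B = 0")
      case True
      have "ennreal L \<le> emeasure lborel A + emeasure lborel B"
        unfolding mE[symmetric] EAB by (rule emeasure_subadditive) (use mAB in auto)
      then have mA: "ennreal L \<le> emeasure lborel A" using True by simp
      have "(\<integral>\<^sup>+x. ennreal (1/t) * indicator A x \<partial>lborel) \<le> I"
        unfolding I_def
      proof (rule nn_integral_mono)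
        fix x
        show "ennreal (1/t) * indicator A x \<le> indicator {y. r y < \<infinity>} x * ennreal (\<bar>indicator (cube c L) x / t\<bar> powr real_of_ereal (r x))"
        proof (cases "x \<in> A")
          case False then show ?thesis by simp
        next
          case True
          then have xE: "x \<in> cube c L" and rf: "r x < \<infinity>" unfolding A_def E_def by auto
          obtain v where v: "r x = ereal v" using rf ge[of x] by (cases "r x") auto
          have v1: "1 \<le> v" using ge[of x] v by simp
          have "(1/t) powr 1 \<le> (1/t) powr v" using v1 t1 by (intro powr_mono) auto
          then have "1/t \<le> (1/t) powr v" using t by simp
          then show ?thesis using xE rf v t True by (simp add: ennreal_leI)
        qed
      qed
      then have "ennreal (1/t) * emeasure lborel A \<le> I" using mAB by (simp add: nn_integral_cmult_indicator)
      moreover have "ennreal (1/t) * ennreal L \<le> ennreal (1/t) * emeasure lborel A"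
        using mA by (rule mult_left_mono) simp
      moreover have "ennreal (1/t) * ennreal L = ennreal (L/t)"
        using t L by (subst ennreal_mult[symmetric]) auto
      ultimately have "ennreal (L/t) \<le> I" by (metis order.trans)
      moreover have "1 < L/t" using tl t by (simp add: field_simps)
      moreover have "(1::ennreal) < ennreal (L/t)" using \<open>1 < L/t\<close> ennreal_lessI[of "L/t" 1] by simp
      ultimately have "1 < I" by (metis less_le_trans)
      moreover have "I \<le> I + S" by (rule add_increasing2) auto
      ultimately show False using IS by (metis less_le_trans not_le)
    next
      case False
      have "ennreal (1/t) \<le> S" unfolding S_def ess_sup_enn_def
      proof (rule Inf_greatest)
        fix a assume "a \<in> {a. AE x in lborel. ennreal \<bar>indicator (cube c L) x / t\<bar> * indicator {y. r y = \<infinity>} x \<le> a}"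
        then have ae: "AE x in lborel. ennreal \<bar>indicator (cube c L) x / t\<bar> * indicator {y. r y = \<infinity>} x \<le> a" by simp
        show "ennreal (1/t) \<le> a"
        proof (rule ccontr)
          assume na: "\<not> ennreal (1/t) \<le> a"
          have "AE x in lborel. x \<notin> B"
            using ae
          proof (rule AE_mp)
            show "AE x in lborel. ennreal \<bar>indicator (cube c L) x / t\<bar> * indicator {y. r y = \<infinity>} x \<le> a \<longrightarrow> x \<notin> B"
              using na t by (auto simp: B_def E_def)
          qed
          then have "emeasure lborel B = 0"
            using AE_iff_measurable[of B lborel "\<lambda>x. x \<notin> B"] mAB by auto
          then show False using False by simp
        qed
      qed
      moreover have "(1::ennreal) < ennreal (1/t)" using t1 ennreal_lessI[of "1/t" 1] by simp
      ultimately have "1 < S" by (metis less_le_trans)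
      moreover have "S \<le> I + S" by (rule add_increasing) auto
      ultimately show False using IS by (metis less_le_trans not_le)
    qed
  qed
qed

lemma ennreal_div_ge1: "(1::ennreal) \<le> D \<Longrightarrow> a / D \<le> a"
  by (metis comm_monoid_mult_class.mult_1 divide_le_posI_ennreal
    mult_right_mono order_less_le_trans zero_le zero_less_one)

lemma norm_zero: "var_norm r (\<lambda>y. 0) = 0"
proof -
  have "var_norm r (\<lambda>y. 0) \<le> 0 + ennreal e" if "0 < e" for e
    using norm_upper[of "\<lambda>y. 0" r e] that by simp
  then have "var_norm r (\<lambda>y. 0) \<le> 0" by (rule ennreal_le_epsilon)
  then show ?thesis by simp
qed

lemma term_zero:
  assumes supp: "\<And>y. g y \<noteq> 0 \<Longrightarrow> (1 < \<bar>y - x\<bar> \<and> \<bar>y - x\<bar> < 2) \<or> (1 < \<bar>y - z\<bar> \<and> \<bar>y - z\<bar> < 2)"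
    and l: "l > 0" and x: "\<bar>x - c\<bar> \<le> l/4" and z: "\<bar>z - c\<bar> \<le> l/4"
    and nz: "annulus_term r g c l (Suc m) \<noteq> 0"
  shows "4/5 < 2^m*l \<and> 2^m*l < 8"
proof (rule ccontr)
  assume na: "\<not> (4/5 < 2^m*l \<and> 2^m*l < 8)"
  define A where "A = 2^m*l"
  have lA: "l \<le> A" using l unfolding A_def by simp
  have na': "\<not> (4/5 < A \<and> A < 8)" using na unfolding A_def .
  have "g y * indicator (cube c (2 ^ Suc m * l) - cube c (2 ^ (Suc m - 1) * l)) y = 0" for y
  proof (cases "g y = 0 \<or> y \<notin> cube c (2 ^ Suc m * l) - cube c (2 ^ (Suc m - 1) * l)")
    case True then show ?thesis by auto
  next
    case False
    then have g: "g y \<noteq> 0" and y1: "\<bar>y - c\<bar> \<le> A" and y2: "A/2 < \<bar>y - c\<bar>"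
      unfolding A_def by (auto simp: cube_def abs_le_iff)
    from supp[OF g] have False
      using na' lA x z y1 y2 by (auto simp: abs_if split: if_splits)
    then show ?thesis ..
  qed
  then have "(\<lambda>y. g y * indicator (cube c (2 ^ Suc m * l) - cube c (2 ^ (Suc m - 1) * l)) y) = (\<lambda>y. 0)"
    by auto
  then have "annulus_term r g c l (Suc m) = 0" unfolding annulus_term_def by (simp add: norm_zero)
  then show False using nz by simp
qed

lemma term_bound:
  assumes meas: "r \<in> borel_measurable borel" and ge: "\<And>x. 1 \<le> r x"
    and supp: "\<And>y. g y \<noteq> 0 \<Longrightarrow> r y = 2 \<and> ((1 < \<bar>y - x\<bar> \<and> \<bar>y - x\<bar> < 2) \<or> (1 < \<bar>y - z\<bar> \<and> \<bar>y - z\<bar> < 2))"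
    and M: "M > 0" and I: "(\<integral>\<^sup>+y. ennreal ((g y / M)^2) \<partial>lborel) \<le> 1"
    and l: "l > 0" and x: "\<bar>x - c\<bar> \<le> l/4" and z: "\<bar>z - c\<bar> \<le> l/4"
  shows "annulus_term r g c l (Suc m) \<le> ennreal (16 * M)"
proof (cases "annulus_term r g c l (Suc m) = 0")
  case True then show ?thesis by simp
next
  case False
  have A: "4/5 < 2^m*l \<and> 2^m*l < 8"
    using term_zero[of g x z l c r m] supp l x z False by blast
  define h where "h y = g y * indicator (cube c (2 ^ Suc m * l) - cube c (2 ^ (Suc m - 1) * l)) y" for y
  have "(\<integral>\<^sup>+y. ennreal ((h y / M)^2) \<partial>lborel) \<le> (\<integral>\<^sup>+y. ennreal ((g y / M)^2) \<partial>lborel)"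
    by (rule nn_integral_mono) (auto simp: h_def indicator_def)
  then have hn: "var_norm r h \<le> ennreal M"
    using I supp by (intro norm_upper[OF _ M]) (auto simp: h_def)
  have "ennreal (min 1 (2 ^ Suc m * l)) \<le> var_norm r (indicator (cube c (2 ^ Suc m * l)))"
    using l by (intro norm_lower[OF meas ge]) auto
  moreover have "min 1 (2 ^ Suc m * l) = 1" using A by auto
  ultimately have D: "1 \<le> var_norm r (indicator (cube c (2 ^ Suc m * l)))" by simp
  have "annulus_term r g c l (Suc m) = ennreal (2 ^ Suc m * l) * var_norm r h / var_norm r (indicator (cube c (2 ^ Suc m * l)))"
    unfolding annulus_term_def h_def by simp
  also have "\<dots> \<le> ennreal (2 ^ Suc m * l) * var_norm r h" by (rule ennreal_div_ge1[OF D])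
  also have "\<dots> \<le> ennreal 16 * ennreal M"
  proof (rule mult_mono)
    show "ennreal (2 ^ Suc m * l) \<le> ennreal 16" using A by (intro ennreal_leI) (simp add: mult.commute)
  qed (use hn in auto)
  also have "\<dots> = ennreal (16 * M)" using M by (subst ennreal_mult) auto
  finally show ?thesis .
qed

lemma sum_bound:
  fixes f :: "nat \<Rightarrow> ennreal" and l :: real
  assumes le: "\<And>m. f m \<le> C" and nz: "\<And>m. f m \<noteq> 0 \<Longrightarrow> 4/5 < 2^m*l \<and> 2^m*l < 8"
  shows "suminf f \<le> 4 * C"
proof (cases "\<forall>m. f m = 0")
  case True then have "f = (\<lambda>_. 0)" by auto
  then show ?thesis by simp
next
  case False
  then obtain m1 where m1: "f m1 \<noteq> 0" by blast
  define m0 where "m0 = (LEAST m. f m \<noteq> 0)"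
  have f0: "f m0 \<noteq> 0" unfolding m0_def using m1 by (rule LeastI)
  have l0: "0 < l"
  proof (rule ccontr)
    assume "\<not> 0 < l"
    then have "2^m1 * l \<le> 0" by (simp add: mult_nonneg_nonpos)
    then show False using nz[OF m1] by linarith
  qed
  have out: "f m = 0" if "m \<notin> {m0..<m0+4}" for m
  proof (rule ccontr)
    assume fm: "f m \<noteq> 0"
    have "m0 \<le> m" unfolding m0_def using fm by (rule Least_le)
    then have "m0 + 4 \<le> m" using that by auto
    then have "(2::real)^(m0+4) \<le> 2^m" by (rule power_increasing) simp
    then have "2^(m0+4) * l \<le> 2^m * l" using l0 by simp
    moreover have "2^(m0+4) * l = 16 * (2^m0 * l)" by (simp add: power_add)
    ultimately show False using nz[OF fm] nz[OF f0] by linarith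
  qed
  have "suminf f = (\<Sum>m\<in>{m0..<m0+4}. f m)" by (rule suminf_finite) (auto simp: out)
  also have "\<dots> \<le> (\<Sum>m\<in>{m0..<m0+4}. C)" by (rule sum_mono) (rule le)
  also have "\<dots> = 4 * C" by simp
  finally show ?thesis .
qed

lemma sq_int_bound:
  fixes g h1 h2 :: "real \<Rightarrow> real"
  assumes b: "b > 0" and [measurable]: "h1 \<in> borel_measurable lborel" "h2 \<in> borel_measurable lborel"
    and i1: "(\<integral>\<^sup>+y. ennreal ((h1 y)^2) \<partial>lborel) = ennreal (1/b)"
    and i2: "(\<integral>\<^sup>+y. ennreal ((h2 y)^2) \<partial>lborel) = ennreal (1/b)"
    and gb: "\<And>y. \<bar>g y\<bar> \<le> \<bar>h1 y\<bar> + \<bar>h2 y\<bar>"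
  shows "(\<integral>\<^sup>+y. ennreal ((g y / (2 / sqrt b))^2) \<partial>lborel) \<le> 1"
proof -
  have pw: "ennreal ((g y / (2 / sqrt b))^2) \<le> ennreal (b/2) * ennreal ((h1 y)^2) + ennreal (b/2) * ennreal ((h2 y)^2)" for y
  proof -
    have sq: "(sqrt b)^2 = b" using b by simp
    have e: "(g y / (2 / sqrt b))^2 = (g y)^2 * b / 4" using b
      by (simp add: power_divide power_mult_distrib)
    have "(g y)^2 = \<bar>g y\<bar>^2" by simp
    also have "\<dots> \<le> (\<bar>h1 y\<bar> + \<bar>h2 y\<bar>)^2"
      by (rule power_mono[OF gb abs_ge_zero])
    also have "\<dots> \<le> 2 * (h1 y)^2 + 2 * (h2 y)^2"
    proof -
      have d: "0 \<le> (\<bar>h1 y\<bar> - \<bar>h2 y\<bar>)^2" by simp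
      then show ?thesis unfolding power2_sum power2_diff power2_abs by linarith
    qed
    finally have G: "(g y)^2 \<le> 2 * (h1 y)^2 + 2 * (h2 y)^2" .
    have "b * (g y)^2 \<le> b * (2 * (h1 y)^2 + 2 * (h2 y)^2)"
      by (rule mult_left_mono[OF G]) (use b in simp)
    then have G2: "b * (g y)^2 \<le> b * (2 * (h1 y)^2) + b * (2 * (h2 y)^2)"
      by (simp add: distrib_left)
    have "(g y / (2 / sqrt b))^2 \<le> b/2 * (h1 y)^2 + b/2 * (h2 y)^2"
      unfolding e using b G2 by (simp add: field_simps)
    then have "ennreal ((g y / (2 / sqrt b))^2) \<le> ennreal (b/2 * (h1 y)^2 + b/2 * (h2 y)^2)"
      by (rule ennreal_leI)
    also have "\<dots> = ennreal (b/2) * ennreal ((h1 y)^2) + ennreal (b/2) * ennreal ((h2 y)^2)"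
    proof -
      have p1: "ennreal (b/2 * (h1 y)^2) = ennreal (b/2) * ennreal ((h1 y)^2)" using b by (intro ennreal_mult) auto
      have p2: "ennreal (b/2 * (h2 y)^2) = ennreal (b/2) * ennreal ((h2 y)^2)" using b by (intro ennreal_mult) auto
      have "ennreal (b/2 * (h1 y)^2 + b/2 * (h2 y)^2) = ennreal (b/2 * (h1 y)^2) + ennreal (b/2 * (h2 y)^2)"
        using b by (intro ennreal_plus) auto
      then show ?thesis unfolding p1 p2 .
    qed
    finally show ?thesis .
  qed
  have "(\<integral>\<^sup>+y. ennreal ((g y / (2 / sqrt b))^2) \<partial>lborel) \<le>
     (\<integral>\<^sup>+y. ennreal (b/2) * ennreal ((h1 y)^2) + ennreal (b/2) * ennreal ((h2 y)^2) \<partial>lborel)"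
    by (rule nn_integral_mono) (rule pw)
  also have "\<dots> = ennreal (b/2) * ennreal (1/b) + ennreal (b/2) * ennreal (1/b)"
    by (simp add: nn_integral_add nn_integral_cmult i1 i2)
  also have "\<dots> = 1"
  proof -
    have q: "ennreal (b/2) * ennreal (1/b) = ennreal (1/2)" using b by (subst ennreal_mult[symmetric]) auto
    have "ennreal (1/2) + ennreal (1/2) = ennreal (1/2 + 1/2)" by (rule ennreal_plus[symmetric]) auto
    then show ?thesis unfolding q by simp
  qed
  finally show ?thesis .
qed

lemma K2_nz: "K2 b t \<noteq> 0 \<Longrightarrow> 0 < t \<and> t < 1"
  by (auto simp: K2_def split: if_splits)

lemma K1_cases: "K1 y = 0 \<or> (K1 y = 1 \<and> y \<in> {2..3})"
  by (auto simp: K1_def indicator_def)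

lemma sum_all:
  assumes meas: "r \<in> borel_measurable borel" and ge: "\<And>x. 1 \<le> r x"
    and supp: "\<And>y. g y \<noteq> 0 \<Longrightarrow> r y = 2 \<and> ((1 < \<bar>y - x\<bar> \<and> \<bar>y - x\<bar> < 2) \<or> (1 < \<bar>y - z\<bar> \<and> \<bar>y - z\<bar> < 2))"
    and M: "M > 0" and I: "(\<integral>\<^sup>+y. ennreal ((g y / M)^2) \<partial>lborel) \<le> 1"
    and l: "l > 0" and x: "x \<in> cube c (l/2)" and z: "z \<in> cube c (l/2)"
  shows "(\<Sum>m. annulus_term r g c l (Suc m)) \<le> 4 * ennreal (16 * M)"
proof -
  have x0: "c - l/4 \<le> x \<and> x \<le> c + l/4" and z0: "c - l/4 \<le> z \<and> z \<le> c + l/4"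
    using x z by (auto simp: cube_def)
  have x': "\<bar>x - c\<bar> \<le> l/4" using x0 unfolding abs_le_iff by linarith
  have z': "\<bar>z - c\<bar> \<le> l/4" using z0 unfolding abs_le_iff by linarith
  show ?thesis
  proof (rule sum_bound[where l = l])
    fix m show "annulus_term r g c l (Suc m) \<le> ennreal (16 * M)"
      by (rule term_bound[OF meas ge supp M I l x' z'])
  next
    fix m assume "annulus_term r g c l (Suc m) \<noteq> 0"
    then show "4/5 < 2^m*l \<and> 2^m*l < 8"
      using term_zero[of g x z l c r m] supp l x' z' by blast
  qed
qed

lemma int_refl1:
  assumes b: "b > 0"
  shows "(\<integral>\<^sup>+y. ennreal ((K2 b (a - y - 1))^2) \<partial>lborel) = ennreal (1/b)"
proof -
  have e: "\<And>y. a - y - 1 = (a - 1) - y" by simp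
  show ?thesis unfolding e by (rule K2_int_refl[OF b])
qed

lemma int_shift1:
  assumes b: "b > 0"
  shows "(\<integral>\<^sup>+y. ennreal ((K2 b (y - a - 1))^2) \<partial>lborel) = ennreal (1/b)"
proof -
  have e: "\<And>y. y - a - 1 = y - (a + 1)" by simp
  show ?thesis unfolding e by (rule K2_int_shift[OF b])
qed

lemma sq_refl:
  assumes b: "b > 0" and gb: "\<And>y. \<bar>g y\<bar> \<le> \<bar>K2 b (x - y - 1)\<bar> + \<bar>K2 b (z - y - 1)\<bar>"
  shows "(\<integral>\<^sup>+y. ennreal ((g y / (2 / sqrt b))^2) \<partial>lborel) \<le> 1"
proof (rule sq_int_bound[OF b _ _ int_refl1[OF b, of x] int_refl1[OF b, of z] gb])
  show "(\<lambda>y. K2 b (x - y - 1)) \<in> borel_measurable lborel" by (rule K2_meas_comp) measurable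
  show "(\<lambda>y. K2 b (z - y - 1)) \<in> borel_measurable lborel" by (rule K2_meas_comp) measurable
qed

lemma sq_shift:
  assumes b: "b > 0" and gb: "\<And>y. \<bar>g y\<bar> \<le> \<bar>K2 b (y - x - 1)\<bar> + \<bar>K2 b (y - z - 1)\<bar>"
  shows "(\<integral>\<^sup>+y. ennreal ((g y / (2 / sqrt b))^2) \<partial>lborel) \<le> 1"
proof (rule sq_int_bound[OF b _ _ int_shift1[OF b, of x] int_shift1[OF b, of z] gb])
  show "(\<lambda>y. K2 b (y - x - 1)) \<in> borel_measurable lborel" by (rule K2_meas_comp) measurable
  show "(\<lambda>y. K2 b (y - z - 1)) \<in> borel_measurable lborel" by (rule K2_meas_comp) measurable
qed

theorem mainTheorem19:
  fixes \<beta> :: real and r :: "real \<Rightarrow> ereal"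
  assumes "\<beta> > 0"
    and "P_log r"
    and "\<forall>x \<in> {2..5}. r x = 2"
    and "ess_inf_on {-7..14} r > 1"
  shows "H1 r (\<lambda>x y. K1 y * K2 \<beta> (x - y - 1)) \<and> H2 r (\<lambda>x y. K1 y * K2 \<beta> (x - y - 1))"
proof -
  have b: "\<beta> > 0" using assms(1) .
  have meas: "r \<in> borel_measurable borel" and ge: "\<And>x. 1 \<le> r x"
  proof -
    have "r \<in> borel_measurable borel \<and> (\<forall>x. 1 \<le> r x)" using assms(2) unfolding P_log_def by blast
    then show "r \<in> borel_measurable borel" "\<And>x. 1 \<le> r x" by blast+
  qed
  have r2: "\<And>y. y \<in> {2..5} \<Longrightarrow> r y = 2" using assms(3) by auto
  define M where "M = 2 / sqrt \<beta>"
  have M: "M > 0" using b unfolding M_def by simp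
  define C where "C = 4 * ennreal (16 * M)"
  have Cfin: "C < \<infinity>" unfolding C_def by (simp add: ennreal_mult_less_top)
  have k1: "(\<Sum>m. annulus_term r (\<lambda>y. K1 y * K2 \<beta> (x - y - 1) - K1 y * K2 \<beta> (z - y - 1)) c l (Suc m)) \<le> C"
    if l: "l > 0" and x: "x \<in> cube c (l/2)" and z: "z \<in> cube c (l/2)" for c l x z
    unfolding C_def
  proof (rule sum_all[OF meas ge _ M _ l x z])
    fix y assume "K1 y * K2 \<beta> (x - y - 1) - K1 y * K2 \<beta> (z - y - 1) \<noteq> 0"
    then have "K1 y \<noteq> 0" and "K2 \<beta> (x - y - 1) \<noteq> 0 \<or> K2 \<beta> (z - y - 1) \<noteq> 0" by auto
    then show "r y = 2 \<and> ((1 < \<bar>y - x\<bar> \<and> \<bar>y - x\<bar> < 2) \<or> (1 < \<bar>y - z\<bar> \<and> \<bar>y - z\<bar> < 2))"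
    proof -
      have "y \<in> {2..5}" using K1_cases[of y] \<open>K1 y \<noteq> 0\<close> by auto
      then have ry: "r y = 2" by (rule r2)
      have "(1 < \<bar>y - x\<bar> \<and> \<bar>y - x\<bar> < 2) \<or> (1 < \<bar>y - z\<bar> \<and> \<bar>y - z\<bar> < 2)"
      proof (cases "K2 \<beta> (x - y - 1) \<noteq> 0")
        case True
        then have "0 < x - y - 1 \<and> x - y - 1 < 1" by (rule K2_nz)
        moreover from this have "\<bar>y - x\<bar> = x - y" by (simp add: abs_if)
        ultimately show ?thesis by linarith
      next
        case False
        then have "K2 \<beta> (z - y - 1) \<noteq> 0" using \<open>K2 \<beta> (x - y - 1) \<noteq> 0 \<or> K2 \<beta> (z - y - 1) \<noteq> 0\<close> by blast
        then have "0 < z - y - 1 \<and> z - y - 1 < 1" by (rule K2_nz)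
        moreover from this have "\<bar>y - z\<bar> = z - y" by (simp add: abs_if)
        ultimately show ?thesis by linarith
      qed
      with ry show ?thesis by blast
    qed
  next
    show "(\<integral>\<^sup>+y. ennreal (((K1 y * K2 \<beta> (x - y - 1) - K1 y * K2 \<beta> (z - y - 1)) / M)^2) \<partial>lborel) \<le> 1"
      unfolding M_def
    proof (rule sq_refl[OF b])
      fix y show "\<bar>K1 y * K2 \<beta> (x - y - 1) - K1 y * K2 \<beta> (z - y - 1)\<bar> \<le> \<bar>K2 \<beta> (x - y - 1)\<bar> + \<bar>K2 \<beta> (z - y - 1)\<bar>"
      proof (cases "K1 y = 0")
        case False then have "K1 y = 1" using K1_cases[of y] by auto
        then show ?thesis by (simp add: abs_triangle_ineq4)
      qed simp
    qed
  qed
  have k2: "(\<Sum>m. annulus_term r (\<lambda>y. K1 x * K2 \<beta> (y - x - 1) - K1 z * K2 \<beta> (y - z - 1)) c l (Suc m)) \<le> C"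
    if l: "l > 0" and x: "x \<in> cube c (l/2)" and z: "z \<in> cube c (l/2)" for c l x z
    unfolding C_def
  proof (rule sum_all[OF meas ge _ M _ l x z])
    fix y assume "K1 x * K2 \<beta> (y - x - 1) - K1 z * K2 \<beta> (y - z - 1) \<noteq> 0"
    then have "(K1 x \<noteq> 0 \<and> K2 \<beta> (y - x - 1) \<noteq> 0) \<or> (K1 z \<noteq> 0 \<and> K2 \<beta> (y - z - 1) \<noteq> 0)" by auto
    then show "r y = 2 \<and> ((1 < \<bar>y - x\<bar> \<and> \<bar>y - x\<bar> < 2) \<or> (1 < \<bar>y - z\<bar> \<and> \<bar>y - z\<bar> < 2))"
    proof (elim disjE conjE)
      assume "K1 x \<noteq> 0" "K2 \<beta> (y - x - 1) \<noteq> 0"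
      then have "x \<in> {2..3}" "0 < y - x - 1 \<and> y - x - 1 < 1" using K1_cases[of x] K2_nz[of \<beta> "y - x - 1"] by auto
      moreover from this have "\<bar>y - x\<bar> = y - x" by (simp add: abs_if)
      moreover have "y \<in> {2..5}" using calculation by auto
      ultimately show ?thesis using r2[of y] by auto
    next
      assume "K1 z \<noteq> 0" "K2 \<beta> (y - z - 1) \<noteq> 0"
      then have "z \<in> {2..3}" "0 < y - z - 1 \<and> y - z - 1 < 1" using K1_cases[of z] K2_nz[of \<beta> "y - z - 1"] by auto
      moreover from this have "\<bar>y - z\<bar> = y - z" by (simp add: abs_if)
      moreover have "y \<in> {2..5}" using calculation by auto
      ultimately show ?thesis using r2[of y] by auto
    qed
  next
    show "(\<integral>\<^sup>+y. ennreal (((K1 x * K2 \<beta> (y - x - 1) - K1 z * K2 \<beta> (y - z - 1)) / M)^2) \<partial>lborel) \<le> 1"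
      unfolding M_def
    proof (rule sq_shift[OF b])
      fix y show "\<bar>K1 x * K2 \<beta> (y - x - 1) - K1 z * K2 \<beta> (y - z - 1)\<bar> \<le> \<bar>K2 \<beta> (y - x - 1)\<bar> + \<bar>K2 \<beta> (y - z - 1)\<bar>"
        using K1_cases[of x] K1_cases[of z] abs_triangle_ineq4[of "K2 \<beta> (y - x - 1)" "K2 \<beta> (y - z - 1)"]
          abs_ge_zero[of "K2 \<beta> (y - x - 1)"] abs_ge_zero[of "K2 \<beta> (y - z - 1)"]
        by (elim disjE conjE) simp_all
    qed
  qed
  have "H1 r (\<lambda>x y. K1 y * K2 \<beta> (x - y - 1))"
    unfolding H1_def
  proof (rule order.strict_trans1[OF _ Cfin], rule SUP_least)
    fix p assume p: "p \<in> {(c, l, x, z). l > 0 \<and> x \<in> cube c (l/2) \<and> z \<in> cube c (l/2)}"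
    obtain c l x z where pe: "p = (c, l, x, z)" by (metis prod_cases4)
    from p have "l > 0" "x \<in> cube c (l/2)" "z \<in> cube c (l/2)" unfolding pe by auto
    from k1[OF this] show "(case p of (c, l, x, z) \<Rightarrow> \<Sum>m. annulus_term r (\<lambda>y. K1 y * K2 \<beta> (x - y - 1) - K1 y * K2 \<beta> (z - y - 1)) c l (Suc m)) \<le> C"
      unfolding pe by simp
  qed
  moreover have "H2 r (\<lambda>x y. K1 y * K2 \<beta> (x - y - 1))"
    unfolding H2_def
  proof (rule order.strict_trans1[OF _ Cfin], rule SUP_least)
    fix p assume p: "p \<in> {(c, l, x, z). l > 0 \<and> x \<in> cube c (l/2) \<and> z \<in> cube c (l/2)}"
    obtain c l x z where pe: "p = (c, l, x, z)" by (metis prod_cases4)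
    from p have "l > 0" "x \<in> cube c (l/2)" "z \<in> cube c (l/2)" unfolding pe by auto
    from k2[OF this] show "(case p of (c, l, x, z) \<Rightarrow> \<Sum>m. annulus_term r (\<lambda>y. K1 x * K2 \<beta> (y - x - 1) - K1 z * K2 \<beta> (y - z - 1)) c l (Suc m)) \<le> C"
      unfolding pe by simp
  qed
  ultimately show ?thesis ..
qed

end
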